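(* Let $n\ge0$, let $T\in\mathcal{T}_n$, and let $\pi=\varphi(T)$. Then $\operatorname{des}(\pi)=\operatorname{cdes}(T)$.
   Context: $\mathcal{T}_n$ is the set of plane (ordered) rooted trees with $n$ edges whose edges are labeled bijectively by $\{1,\dots,n\}$. For a non-root vertex $c$ whose edge to its parent has label $\ell$, define recursively $W(c)=\ell\,U\,\ell$, where $U$ is the concatenation of $W(c')$ over the children $c'$ of $c$ from left to right; $\varphi(T)$ is the concatenation of $W(c)$ over the children $c$ of the root from left to right (i.e. the sequence of edge labels recorded along a left-to-right depth-first walk, each edge recorded when traversed downward and upward). For a sequence $\pi_1\cdots\pi_r$, $i\in\{1,\dots,r\}$ is a descent if $\pi_i>\pi_{i+1}$ or $i=r$, and $\operatorname{des}(\pi)$ counts descents; the number of cyclic descents is $\operatorname{cdes}(\pi_1\cdots\pi_r)=|\{i\in\{1,\dots,r\}:\pi_i>\pi_{i+1}\}|$ with the convention $\pi_{r+1}=\pi_1$. For a vertex $v$ of $T$ whose children edges have labels $a_1,\dots,a_d$ from left to right: if $v$ is not the root and its parent edge has label $\ell$, $\operatorname{cdes}(v)=\operatorname{cdes}(\ell a_1\cdots a_d)$; if $v$ is the root, $\operatorname{cdes}(v)=\operatorname{des}(a_1\cdots a_d)$. Finally $\operatorname{cdes}(T)=\sum_v\operatorname{cdes}(v)$ over all vertices $v$ of $T$. *)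

theory Defs
  imports Main
begin

text \<open>Plane (ordered) rooted trees with labelled edges: a vertex is given by the
left-to-right list of its children, each paired with the label of the edge
from the vertex to that child.\<close>
datatype ptree = Node "(nat \<times> ptree) list"

fun labels :: "ptree \<Rightarrow> nat list" where
  "labels (Node cs) = concat (map (\<lambda>(l, t). l # labels t) cs)"

definition T_set :: "nat \<Rightarrow> ptree set" where
  "T_set n = {T. distinct (labels T) \<and> set (labels T) = {1..n}}"

fun phi :: "ptree \<Rightarrow> nat list" where
  "phi (Node cs) = concat (map (\<lambda>(l, t). l # phi t @ [l]) cs)"

text \<open>Descents (position r always counts), 0-indexed positions.\<close>
definition des :: "nat list \<Rightarrow> nat" where
  "des xs = card {i. i < length xs \<and> (i = length xs - 1 \<or> xs ! i > xs ! (i + 1))}"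

definition cdes :: "nat list \<Rightarrow> nat" where
  "cdes xs = card {i. i < length xs \<and> xs ! i > xs ! ((i + 1) mod length xs)}"

text \<open>Sum of cdes(v) over all vertices of the subtree hanging below an edge labelled l.\<close>
fun cdes_sub :: "nat \<Rightarrow> ptree \<Rightarrow> nat" where
  "cdes_sub l (Node cs) =
     cdes (l # map fst cs) + sum_list (map (\<lambda>(l', t). cdes_sub l' t) cs)"

fun cdes_tree :: "ptree \<Rightarrow> nat" where
  "cdes_tree (Node cs) = des (map fst cs) + sum_list (map (\<lambda>(l, t). cdes_sub l t) cs)"

end

theory Submission
  imports Defs
begin

fun dd :: "nat list \<Rightarrow> nat" where
  "dd (x # y # xs) = (if x > y then 1 else 0) + dd (y # xs)"
| "dd _ = 0"

lemma dd_card: "dd xs = card {i. i + 1 < length xs \<and> xs ! i > xs ! (i + 1)}"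
proof (induction xs rule: dd.induct)
  case (1 x y xs)
  let ?S = "{i. i + 1 < length (y # xs) \<and> (y # xs) ! i > (y # xs) ! (i + 1)}"
  have eq: "{i. i + 1 < length (x # y # xs) \<and> (x # y # xs) ! i > (x # y # xs) ! (i + 1)}
      = (if x > y then {0} else {}) \<union> Suc ` ?S"
    apply (rule set_eqI)
    subgoal for i by (cases i) auto
    done
  have fin: "finite ?S" by (rule finite_subset[of _ "{..<length (y#xs)}"]) auto
  have "card ((if x > y then {0} else {}) \<union> Suc ` ?S) = (if x > y then 1 else 0) + card ?S"
    using fin by (auto simp: card_image)
  then show ?case using 1 eq by simp
qed auto

lemma des_dd: "des xs = dd xs + (if xs = [] then 0 else 1)"
proof (cases "xs = []")
  case True then show ?thesis by (simp add: des_def)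
next
  case False
  let ?S = "{i. i + 1 < length xs \<and> xs ! i > xs ! (i + 1)}"
  have eq: "{i. i < length xs \<and> (i = length xs - 1 \<or> xs ! i > xs ! (i + 1))} = insert (length xs - 1) ?S"
    using False by auto
  have fin: "finite ?S" by (rule finite_subset[of _ "{..<length xs}"]) auto
  have "length xs - 1 \<notin> ?S" by auto
  then show ?thesis using False eq fin by (simp add: des_def dd_card)
qed

lemma cdes_dd: "cdes (x # xs) = dd (x # xs @ [x])"
proof -
  have "{i. i < length (x # xs) \<and> (x # xs) ! i > (x # xs) ! ((i + 1) mod length (x # xs))}
      = {i. i + 1 < length (x # xs @ [x]) \<and> (x # xs @ [x]) ! i > (x # xs @ [x]) ! (i + 1)}"
  proof (rule set_eqI)
    fix i
    show "i \<in> {i. i < length (x # xs) \<and> (x # xs) ! i > (x # xs) ! ((i + 1) mod length (x # xs))} \<longleftrightarrow>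
      i \<in> {i. i + 1 < length (x # xs @ [x]) \<and> (x # xs @ [x]) ! i > (x # xs @ [x]) ! (i + 1)}"
    proof (cases "i < length (x # xs)")
      case True
      have a: "(x # xs @ [x]) ! i = (x # xs) ! i" using True
        by (metis append_Cons nth_append)
      have b: "(x # xs @ [x]) ! (i + 1) = (x # xs) ! ((i + 1) mod length (x # xs))"
      proof (cases "i + 1 < length (x # xs)")
        case True then show ?thesis by (metis append_Cons nth_append mod_less)
      next
        case False
        then have "i + 1 = length (x # xs)" using \<open>i < length (x # xs)\<close> by simp
        then show ?thesis by (simp add: nth_append)
      qed
      show ?thesis using True a b by simp
    next
      case False then show ?thesis by simp
    qed
  qed
  then show ?thesis by (simp add: cdes_def dd_card)
qed

lemma dd_append: "w \<noteq> [] \<Longrightarrow> dd (w @ r) = dd w + dd (last w # r)"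
  by (induction w rule: dd.induct) auto

lemma dd_concat:
  assumes "\<forall>w\<in>set ws. w \<noteq> [] \<and> last w = hd w"
  shows "dd (x # concat ws @ ys) = dd (x # map hd ws @ ys) + sum_list (map dd ws)"
  using assms
proof (induction ws arbitrary: x)
  case Nil then show ?case by simp
next
  case (Cons w ws)
  have w: "w \<noteq> []" "last w = hd w" using Cons.prems by auto
  have "dd (x # concat (w # ws) @ ys) = (if x > hd w then 1 else 0) + dd (w @ concat ws @ ys)"
    using w by (cases w) auto
  also have "dd (w @ concat ws @ ys) = dd w + dd (hd w # concat ws @ ys)"
    using dd_append[OF w(1)] w(2) by simp
  also have "dd (hd w # concat ws @ ys) = dd (hd w # map hd ws @ ys) + sum_list (map dd ws)"
    using Cons by simp
  finally show ?case by simp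
qed

lemma sub_lemma: "dd (l # phi t @ [l]) = cdes_sub l t"
proof (induction t arbitrary: l)
  case (Node cs)
  let ?ws = "map (\<lambda>(l, t). l # phi t @ [l]) cs"
  have h: "\<forall>w\<in>set ?ws. w \<noteq> [] \<and> last w = hd w" by auto
  have hd: "map hd ?ws = map fst cs" by (auto simp: case_prod_beta)
  have s: "map dd ?ws = map (\<lambda>(l', t). cdes_sub l' t) cs"
    using Node by (auto simp: case_prod_beta intro!: map_cong)
  have "dd (l # phi (Node cs) @ [l]) = dd (l # concat ?ws @ [l])" by simp
  also have "\<dots> = dd (l # map hd ?ws @ [l]) + sum_list (map dd ?ws)"
    by (rule dd_concat[OF h])
  also have "\<dots> = cdes_sub l (Node cs)"
    unfolding hd s by (simp add: cdes_dd)
  finally show ?case .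
qed

theorem lemma2p1:
  fixes n :: nat and T :: ptree
  assumes "T \<in> T_set n"
  shows "des (phi T) = cdes_tree T"
proof (cases T)
  case (Node cs)
  let ?ws = "map (\<lambda>(l, t). l # phi t @ [l]) cs"
  have h: "\<forall>w\<in>set ?ws. w \<noteq> [] \<and> last w = hd w" by auto
  have hd: "map hd ?ws = map fst cs" by (auto simp: case_prod_beta)
  have s: "map dd ?ws = map (\<lambda>(l', t). cdes_sub l' t) cs"
    using sub_lemma by (auto simp: case_prod_beta intro!: map_cong)
  show ?thesis
  proof (cases cs)
    case Nil then show ?thesis using Node by (simp add: des_def)
  next
    case (Cons c cs')
    obtain w ws' where ws: "?ws = w # ws'" using Cons by auto
    have hw: "w \<noteq> []" "last w = hd w" "\<forall>w\<in>set ws'. w \<noteq> [] \<and> last w = hd w"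
      using h ws by (metis list.set_intros)+
    have "dd (concat ?ws) = dd w + dd (hd w # concat ws' @ [])"
      using ws dd_append[OF hw(1)] hw(2) by simp
    also have "\<dots> = dd w + dd (hd w # map hd ws') + sum_list (map dd ws')"
      using dd_concat[OF hw(3), of "hd w" "[]"] by simp
    also have "\<dots> = dd (map hd ?ws) + sum_list (map dd ?ws)"
      unfolding ws using hw(1) by (cases w; cases ws') auto
    finally have "dd (concat ?ws) = dd (map fst cs) + sum_list (map (\<lambda>(l', t). cdes_sub l' t) cs)"
      unfolding hd s .
    moreover have "concat ?ws \<noteq> []" using ws hw(1) by simp
    moreover have "map fst cs \<noteq> []" using Cons by simp
    moreover have "phi T = concat ?ws" using Node by simp
    moreover have "cdes_tree T = des (map fst cs) + sum_list (map (\<lambda>(l', t). cdes_sub l' t) cs)"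
      using Node by simp
    ultimately show ?thesis by (simp only: des_dd)
  qed
qed

end
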